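(* The cardinality of any SudoQ of size $4\times4$ belongs to the set $\{4,6,8,16\}$.
   Context: For $N\ge1$, a SudoQ (quantum Sudoku) of size $N^2\times N^2$ is an $N^2\times N^2$ array of unit vectors in $\mathbb{C}^{N^2}$ such that the entries of each row, of each column, and of each of the $N^2$ disjoint $N\times N$ blocks (obtained by partitioning rows and columns into $N$ consecutive groups of $N$) form an orthonormal basis of $\mathbb{C}^{N^2}$. Its cardinality is the number of distinct entries, vectors differing only by a global phase being considered equal. Here $N=2$. *)

theory Defs
  imports "HOL-Analysis.Analysis"
begin

definition cinner :: "complex ^ 4 \<Rightarrow> complex ^ 4 \<Rightarrow> complex" where
  "cinner v w = (\<Sum>i\<in>UNIV. cnj (v $ i) * w $ i)"

definition is_onb :: "(nat \<Rightarrow> complex ^ 4) \<Rightarrow> bool" where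
  "is_onb f \<longleftrightarrow>
     (\<forall>k<4. \<forall>l<4. cinner (f k) (f l) = (if k = l then 1 else 0)) \<and>
     (\<forall>w :: complex ^ 4. w = (\<Sum>k<4. cinner (f k) w *s f k))"

definition sudoq4 :: "(nat \<Rightarrow> nat \<Rightarrow> complex ^ 4) \<Rightarrow> bool" where
  "sudoq4 S \<longleftrightarrow>
     (\<forall>i<4. \<forall>j<4. cinner (S i j) (S i j) = 1) \<and>
     (\<forall>i<4. is_onb (\<lambda>j. S i j)) \<and>
     (\<forall>j<4. is_onb (\<lambda>i. S i j)) \<and>
     (\<forall>a<2. \<forall>b<2. is_onb (\<lambda>k. S (2 * a + k div 2) (2 * b + k mod 2)))"

definition phase_eq :: "complex ^ 4 \<Rightarrow> complex ^ 4 \<Rightarrow> bool" where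
  "phase_eq v w \<longleftrightarrow> (\<exists>c. norm c = 1 \<and> w = c *s v)"

definition sudoq_card :: "(nat \<Rightarrow> nat \<Rightarrow> complex ^ 4) \<Rightarrow> nat" where
  "sudoq_card S = card ((\<lambda>(i, j). {w. phase_eq (S i j) w}) ` ({..<4} \<times> {..<4}))"

end

theory Submission
  imports Defs
begin


lemma cinner_cnj: "cinner w v = cnj (cinner v w)"
  unfolding cinner_def by (simp add: mult.commute)

lemma cinner_sym0: "cinner v w = 0 \<Longrightarrow> cinner w v = 0"
  by (metis cinner_cnj complex_cnj_zero)

lemma cinner_scale_right [simp]: "cinner v (c *s w) = c * cinner v w"
  unfolding cinner_def by (simp add: sum_distrib_left algebra_simps)

lemma cinner_scale_left [simp]: "cinner (c *s v) w = cnj c * cinner v w"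
  unfolding cinner_def by (simp add: sum_distrib_left algebra_simps)

lemma cinner_add_right [simp]: "cinner v (w + u) = cinner v w + cinner v u"
  unfolding cinner_def by (simp add: sum.distrib algebra_simps)

lemma cinner_zero_right [simp]: "cinner v 0 = 0"
  unfolding cinner_def by simp

lemma cinner_zero_left [simp]: "cinner 0 v = 0"
  unfolding cinner_def by simp

definition orth4 :: "complex^4 \<Rightarrow> complex^4 \<Rightarrow> complex^4 \<Rightarrow> complex^4 \<Rightarrow> bool" where
  "orth4 a b c d \<longleftrightarrow> cinner a a = 1 \<and> cinner b b = 1 \<and> cinner c c = 1 \<and> cinner d d = 1 \<and>
    cinner a b = 0 \<and> cinner a c = 0 \<and> cinner a d = 0 \<and> cinner b c = 0 \<and> cinner b d = 0 \<and> cinner c d = 0 \<and>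
    cinner b a = 0 \<and> cinner c a = 0 \<and> cinner d a = 0 \<and> cinner c b = 0 \<and> cinner d b = 0 \<and> cinner d c = 0"

definition onb4 :: "complex^4 \<Rightarrow> complex^4 \<Rightarrow> complex^4 \<Rightarrow> complex^4 \<Rightarrow> bool" where
  "onb4 a b c d \<longleftrightarrow> orth4 a b c d \<and>
    (\<forall>v. v = cinner a v *s a + cinner b v *s b + cinner c v *s c + cinner d v *s d)"

lemma onb4_orth: "onb4 a b c d \<Longrightarrow> orth4 a b c d" by (simp add: onb4_def)

lemma onb4_exp: "onb4 a b c d \<Longrightarrow> v = cinner a v *s a + cinner b v *s b + cinner c v *s c + cinner d v *s d"
  by (simp add: onb4_def)

lemma onb4_sw12: "onb4 a b c d \<Longrightarrow> onb4 b a c d"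
  unfolding onb4_def orth4_def by (simp add: add_ac)
lemma onb4_sw23: "onb4 a b c d \<Longrightarrow> onb4 a c b d"
  unfolding onb4_def orth4_def by (simp add: add_ac)
lemma onb4_sw34: "onb4 a b c d \<Longrightarrow> onb4 a b d c"
  unfolding onb4_def orth4_def by (simp add: add_ac)
lemma onb4_swp: "onb4 a b c d \<Longrightarrow> onb4 c d a b"
  unfolding onb4_def orth4_def by (simp add: add_ac)

lemma is_onb_onb4: "is_onb f \<Longrightarrow> onb4 (f 0) (f 1) (f 2) (f 3)"
  unfolding is_onb_def onb4_def orth4_def
  by (simp add: numeral_eq_Suc lessThan_Suc add_ac)

definition pe :: "complex^4 \<Rightarrow> complex^4 \<Rightarrow> bool" where "pe = phase_eq"
definition cls :: "complex^4 \<Rightarrow> (complex^4) set" where "cls v = {w. phase_eq v w}"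

lemma norm1_cnj: "norm (c::complex) = 1 \<Longrightarrow> cnj c * c = 1"
  by (metis complex_norm_square mult.commute of_real_1 power_one)

lemma pe_refl: "pe v v"
  unfolding pe_def phase_eq_def by (rule exI[of _ 1]) simp

lemma pe_sym: "pe u v \<Longrightarrow> pe v u"
  unfolding pe_def phase_eq_def
proof -
  assume "\<exists>c. cmod c = 1 \<and> v = c *s u"
  then obtain c where c: "cmod c = 1" "v = c *s u" by blast
  have "cnj c *s v = (cnj c * c) *s u" by (simp add: c(2) vector_smult_assoc)
  also have "\<dots> = u" using norm1_cnj[OF c(1)] by simp
  finally show "\<exists>c. cmod c = 1 \<and> u = c *s v" using c(1) by (intro exI[of _ "cnj c"]) auto
qed

lemma pe_trans: "pe u v \<Longrightarrow> pe v w \<Longrightarrow> pe u w"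
  unfolding pe_def phase_eq_def
  by (metis norm_mult mult_1_right vector_smult_assoc)

lemma cls_eq: "(cls u = cls v) = pe u v"
proof
  assume "cls u = cls v"
  then have "v \<in> cls u" using pe_refl by (simp add: cls_def pe_def)
  then show "pe u v" by (simp add: cls_def pe_def)
next
  assume "pe u v"
  then show "cls u = cls v" unfolding cls_def
    by (auto simp: pe_def[symmetric] intro: pe_trans pe_sym)
qed

lemma pe_tr_r: "pe a b \<Longrightarrow> cinner b v = 0 \<Longrightarrow> cinner a v = 0"
  unfolding pe_def phase_eq_def by auto

lemma pe_tr_l: "pe a b \<Longrightarrow> cinner a v = 0 \<Longrightarrow> cinner b v = 0"
  unfolding pe_def phase_eq_def by auto

lemma pe_nz: "cinner u u = 1 \<Longrightarrow> pe u v \<Longrightarrow> cinner u v \<noteq> 0"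
  unfolding pe_def phase_eq_def by auto

lemma L3: assumes "onb4 a b c d" "cinner v v = 1" "cinner a v = 0" "cinner b v = 0" "cinner c v = 0"
  shows "pe d v"
proof -
  have v: "v = cinner d v *s d" using onb4_exp[OF assms(1), of v] assms by simp
  have dd: "cinner d d = 1" using onb4_orth[OF assms(1)] by (simp add: orth4_def)
  have "cinner v v = cnj (cinner d v) * cinner d v"
    by (subst (1 2) v) (simp add: dd)
  then have "cnj (cinner d v) * cinner d v = 1" using assms(2) by simp
  then have "complex_of_real ((cmod (cinner d v))^2) = 1"
    by (simp only: complex_norm_square mult.commute)
  then have "(cmod (cinner d v))^2 = 1"
    using of_real_eq_1_iff by blast
  then have "cmod (cinner d v) = 1"
    by (metis power2_eq_1_iff norm_ge_zero neg_0_le_iff_le zero_neq_neg_one le_minus_one_simps(3))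
  then show ?thesis unfolding pe_def phase_eq_def using v by blast
qed

lemma npe: "cinner u u = 1 \<Longrightarrow> cinner u v = 0 \<Longrightarrow> pe u v = False"
  using pe_nz by blast

lemma pe_co: "pe u v \<Longrightarrow> (cinner e u = 0) = (cinner e v = 0)"
  unfolding pe_def phase_eq_def by auto

lemma npe_coord: "cinner e u = 0 \<Longrightarrow> cinner e v \<noteq> 0 \<Longrightarrow> pe u v = False"
  using pe_co by blast
lemma npe_coord2: "cinner e u \<noteq> 0 \<Longrightarrow> cinner e v = 0 \<Longrightarrow> pe u v = False"
  using pe_co by blast




lemma plane:
  assumes "onb4 p q r s" "cinner u u = 1" "cinner u' u' = 1" "cinner u u' = 0"
    "cinner p u = 0" "cinner q u = 0" "cinner p u' = 0" "cinner q u' = 0" "cinner r u = 0"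
  shows "pe s u \<and> pe r u' \<and> cinner s u' = 0 \<and> cinner r u' \<noteq> 0 \<and> cinner s u \<noteq> 0"
proof -
  have o: "orth4 p q r s" using assms(1) by (rule onb4_orth)
  have su: "pe s u" using L3[OF assms(1) assms(2) assms(5,6,9)] .
  have su': "cinner s u' = 0" using pe_tr_r[OF su assms(4)] .
  have ru': "pe r u'" using L3[OF onb4_sw34[OF assms(1)] assms(3) assms(7,8) su'] .
  show ?thesis using su su' ru' pe_nz o unfolding orth4_def by blast
qed

lemma cycz:
  fixes A3 A4 B1 B2 C2 C4 D1 D3 p1 p2 p3 p4 :: complex
  assumes "A3*p3 + A4*p4 = 0" "B1*p1 + B2*p2 = 0" "C2*p2 + C4*p4 = 0" "D1*p1 + D3*p3 = 0"
    "\<not>(p1=0 \<and> p2=0 \<and> p3=0 \<and> p4=0)"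
  shows "(B1*C2*A4*D3 = 0) = (B2*C4*A3*D1 = 0)"
proof -
  have "(B1*C2*A4*D3 - B2*C4*A3*D1) * p1 = 0" using assms(1-4) by algebra
  moreover have "(B1*C2*A4*D3 - B2*C4*A3*D1) * p2 = 0" using assms(1-4) by algebra
  moreover have "(B1*C2*A4*D3 - B2*C4*A3*D1) * p3 = 0" using assms(1-4) by algebra
  moreover have "(B1*C2*A4*D3 - B2*C4*A3*D1) * p4 = 0" using assms(1-4) by algebra
  ultimately have "B1*C2*A4*D3 = B2*C4*A3*D1" using assms(5) by auto
  then show ?thesis by simp
qed

lemma chain:
  fixes A3 A4 B1 B2 C2 C4 D1 D3 p1 p2 p3 p4 :: complex
  assumes "A3*p3 + A4*p4 = 0" "B1*p1 + B2*p2 = 0" "C2*p2 + C4*p4 = 0" "D1*p1 + D3*p3 = 0"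
    "\<not>(p1=0 \<and> p2=0 \<and> p3=0 \<and> p4=0)"
    "A3 \<noteq> 0" "A4 \<noteq> 0" "B1 \<noteq> 0" "B2 \<noteq> 0" "C2 \<noteq> 0" "C4 \<noteq> 0" "D1 \<noteq> 0" "D3 \<noteq> 0"
  shows "p1 \<noteq> 0 \<and> p2 \<noteq> 0 \<and> p3 \<noteq> 0 \<and> p4 \<noteq> 0"
proof -
  have e1: "p1 = 0 \<longleftrightarrow> p2 = 0" using assms(2,8,9) by (auto simp: add_eq_0_iff)
  have e2: "p2 = 0 \<longleftrightarrow> p4 = 0" using assms(3,10,11) by (auto simp: add_eq_0_iff)
  have e3: "p3 = 0 \<longleftrightarrow> p4 = 0" using assms(1,6,7) by (auto simp: add_eq_0_iff)
  show ?thesis using e1 e2 e3 assms(5) by blast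
qed

definition gset where "gset a00 a01 a02 a03 a10 a11 a12 a13 a20 a21 a22 a23 a30 a31 a32 a33 =
  {a00, a01, a02, a03, a10, a11, a12, a13, a20, a21, a22, a23, a30, a31, a32, a33}"

lemma card_R:
  assumes "set R \<subseteq> V" "\<forall>v\<in>V. \<exists>r\<in>set R. pe r v" "distinct (map cls R)"
  shows "card (cls ` V) = length R"
proof -
  have "cls ` V = cls ` set R"
  proof
    show "cls ` V \<subseteq> cls ` set R"
    proof
      fix x assume "x \<in> cls ` V"
      then obtain v where v: "v \<in> V" "x = cls v" by blast
      then obtain r where r: "r \<in> set R" "pe r v" using assms(2) by blast
      then have "cls r = x" using v cls_eq by simp
      then show "x \<in> cls ` set R" using r by blast
    qed
    show "cls ` set R \<subseteq> cls ` V" using assms(1) by auto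
  qed
  then show ?thesis using distinct_card[OF assms(3)] by simp
qed

locale grid =
  fixes a00 a01 a02 a03 a10 a11 a12 a13 a20 a21 a22 a23 a30 a31 a32 a33 :: "complex^4"
  assumes r0: "onb4 a00 a01 a02 a03" and r1: "onb4 a10 a11 a12 a13"
    and r2: "onb4 a20 a21 a22 a23" and r3: "onb4 a30 a31 a32 a33"
    and c0: "onb4 a00 a10 a20 a30" and c1: "onb4 a01 a11 a21 a31"
    and c2: "onb4 a02 a12 a22 a32" and c3: "onb4 a03 a13 a23 a33"
    and b00: "onb4 a00 a01 a10 a11" and b01: "onb4 a02 a03 a12 a13"
    and b10: "onb4 a20 a21 a30 a31" and b11: "onb4 a22 a23 a32 a33"
begin

lemmas O = r0[THEN onb4_orth, unfolded orth4_def] r1[THEN onb4_orth, unfolded orth4_def]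
  r2[THEN onb4_orth, unfolded orth4_def] r3[THEN onb4_orth, unfolded orth4_def]
  c0[THEN onb4_orth, unfolded orth4_def] c1[THEN onb4_orth, unfolded orth4_def]
  c2[THEN onb4_orth, unfolded orth4_def] c3[THEN onb4_orth, unfolded orth4_def]
  b00[THEN onb4_orth, unfolded orth4_def] b01[THEN onb4_orth, unfolded orth4_def]
  b10[THEN onb4_orth, unfolded orth4_def] b11[THEN onb4_orth, unfolded orth4_def]

lemma iexp: "cinner u v = cnj (cinner a00 u) * cinner a00 v + cnj (cinner a01 u) * cinner a01 v
   + cnj (cinner a10 u) * cinner a10 v + cnj (cinner a11 u) * cinner a11 v"
proof -
  have e: "v = cinner a00 v *s a00 + cinner a01 v *s a01 + cinner a10 v *s a10 + cinner a11 v *s a11"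
    by (rule onb4_exp[OF b00])
  have "cinner u v = cinner u (cinner a00 v *s a00 + cinner a01 v *s a01 + cinner a10 v *s a10 + cinner a11 v *s a11)"
    by (rule arg_cong[OF e])
  also have "\<dots> = cinner a00 v * cinner u a00 + cinner a01 v * cinner u a01 + cinner a10 v * cinner u a10 + cinner a11 v * cinner u a11"
    by simp
  also have "\<dots> = cnj (cinner a00 u) * cinner a00 v + cnj (cinner a01 u) * cinner a01 v
   + cnj (cinner a10 u) * cinner a10 v + cnj (cinner a11 u) * cinner a11 v"
    by (simp add: cinner_cnj[of u] mult.commute)
  finally show ?thesis .
qed

lemma feq12: "cinner u f = 0 \<Longrightarrow> cinner a00 u = 0 \<Longrightarrow> cinner a01 u = 0 \<Longrightarrow>
  cnj (cinner a10 u) * cinner a10 f + cnj (cinner a11 u) * cinner a11 f = 0"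
  using iexp[of u f] by simp
lemma feq34: "cinner u f = 0 \<Longrightarrow> cinner a10 u = 0 \<Longrightarrow> cinner a11 u = 0 \<Longrightarrow>
  cnj (cinner a00 u) * cinner a00 f + cnj (cinner a01 u) * cinner a01 f = 0"
  using iexp[of u f] by simp
lemma feq13: "cinner u f = 0 \<Longrightarrow> cinner a00 u = 0 \<Longrightarrow> cinner a10 u = 0 \<Longrightarrow>
  cnj (cinner a01 u) * cinner a01 f + cnj (cinner a11 u) * cinner a11 f = 0"
  using iexp[of u f] by simp
lemma feq24: "cinner u f = 0 \<Longrightarrow> cinner a01 u = 0 \<Longrightarrow> cinner a11 u = 0 \<Longrightarrow>
  cnj (cinner a00 u) * cinner a00 f + cnj (cinner a10 u) * cinner a10 f = 0"
  using iexp[of u f] by simp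

lemma nz: "cinner f f = 1 \<Longrightarrow> \<not>(cinner a00 f = 0 \<and> cinner a01 f = 0 \<and> cinner a10 f = 0 \<and> cinner a11 f = 0)"
  using onb4_exp[OF b00, of f] by auto

lemma b00p:
  "onb4 a00 a01 a11 a10" "onb4 a10 a11 a00 a01" "onb4 a10 a11 a01 a00"
  "onb4 a00 a10 a01 a11" "onb4 a00 a10 a11 a01" "onb4 a01 a11 a00 a10" "onb4 a01 a11 a10 a00"
  "onb4 a01 a10 a11 a00"
  using b00 by (meson onb4_sw12 onb4_sw23 onb4_sw34 onb4_swp)+

lemma L3e: "cinner f f = 1 \<Longrightarrow>
  (cinner a00 f = 0 \<and> cinner a01 f = 0 \<and> cinner a10 f = 0 \<longrightarrow> pe a11 f) \<and>
  (cinner a00 f = 0 \<and> cinner a01 f = 0 \<and> cinner a11 f = 0 \<longrightarrow> pe a10 f) \<and>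
  (cinner a00 f = 0 \<and> cinner a10 f = 0 \<and> cinner a11 f = 0 \<longrightarrow> pe a01 f) \<and>
  (cinner a01 f = 0 \<and> cinner a10 f = 0 \<and> cinner a11 f = 0 \<longrightarrow> pe a00 f)"
  using L3[OF b00] L3[OF b00p(1)] L3[OF b00p(5)] L3[OF b00p(8)] by blast

lemma X3: "cinner a10 a02 = 0 \<Longrightarrow> pe a11 a02 \<and> pe a10 a03 \<and> cinner a11 a03 = 0 \<and> cinner a10 a03 \<noteq> 0 \<and> cinner a11 a02 \<noteq> 0"
  by (rule plane[OF b00]) (simp_all add: O)
lemma X4: "cinner a11 a02 = 0 \<Longrightarrow> pe a10 a02 \<and> pe a11 a03 \<and> cinner a10 a03 = 0 \<and> cinner a11 a03 \<noteq> 0 \<and> cinner a10 a02 \<noteq> 0"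
  by (rule plane[OF b00p(1)]) (simp_all add: O)
lemma X'3: "cinner a10 a03 = 0 \<Longrightarrow> pe a11 a03 \<and> pe a10 a02 \<and> cinner a11 a02 = 0 \<and> cinner a10 a02 \<noteq> 0 \<and> cinner a11 a03 \<noteq> 0"
  by (rule plane[OF b00]) (simp_all add: O)
lemma X'4: "cinner a11 a03 = 0 \<Longrightarrow> pe a10 a03 \<and> pe a11 a02 \<and> cinner a10 a02 = 0 \<and> cinner a11 a02 \<noteq> 0 \<and> cinner a10 a03 \<noteq> 0"
  by (rule plane[OF b00p(1)]) (simp_all add: O)
lemma Y1: "cinner a00 a12 = 0 \<Longrightarrow> pe a01 a12 \<and> pe a00 a13 \<and> cinner a01 a13 = 0 \<and> cinner a00 a13 \<noteq> 0 \<and> cinner a01 a12 \<noteq> 0"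
  by (rule plane[OF b00p(2)]) (simp_all add: O)
lemma Y2: "cinner a01 a12 = 0 \<Longrightarrow> pe a00 a12 \<and> pe a01 a13 \<and> cinner a00 a13 = 0 \<and> cinner a01 a13 \<noteq> 0 \<and> cinner a00 a12 \<noteq> 0"
  by (rule plane[OF b00p(3)]) (simp_all add: O)
lemma Y'1: "cinner a00 a13 = 0 \<Longrightarrow> pe a01 a13 \<and> pe a00 a12 \<and> cinner a01 a12 = 0 \<and> cinner a00 a12 \<noteq> 0 \<and> cinner a01 a13 \<noteq> 0"
  by (rule plane[OF b00p(2)]) (simp_all add: O)
lemma Y'2: "cinner a01 a13 = 0 \<Longrightarrow> pe a00 a13 \<and> pe a01 a12 \<and> cinner a00 a12 = 0 \<and> cinner a01 a12 \<noteq> 0 \<and> cinner a00 a13 \<noteq> 0"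
  by (rule plane[OF b00p(3)]) (simp_all add: O)
lemma Z2: "cinner a01 a20 = 0 \<Longrightarrow> pe a11 a20 \<and> pe a01 a30 \<and> cinner a11 a30 = 0 \<and> cinner a01 a30 \<noteq> 0 \<and> cinner a11 a20 \<noteq> 0"
  by (rule plane[OF b00p(4)]) (simp_all add: O)
lemma Z4: "cinner a11 a20 = 0 \<Longrightarrow> pe a01 a20 \<and> pe a11 a30 \<and> cinner a01 a30 = 0 \<and> cinner a11 a30 \<noteq> 0 \<and> cinner a01 a20 \<noteq> 0"
  by (rule plane[OF b00p(5)]) (simp_all add: O)
lemma Z'2: "cinner a01 a30 = 0 \<Longrightarrow> pe a11 a30 \<and> pe a01 a20 \<and> cinner a11 a20 = 0 \<and> cinner a01 a20 \<noteq> 0 \<and> cinner a11 a30 \<noteq> 0"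
  by (rule plane[OF b00p(4)]) (simp_all add: O)
lemma Z'4: "cinner a11 a30 = 0 \<Longrightarrow> pe a01 a30 \<and> pe a11 a20 \<and> cinner a01 a20 = 0 \<and> cinner a11 a20 \<noteq> 0 \<and> cinner a01 a30 \<noteq> 0"
  by (rule plane[OF b00p(5)]) (simp_all add: O)
lemma W1: "cinner a00 a21 = 0 \<Longrightarrow> pe a10 a21 \<and> pe a00 a31 \<and> cinner a10 a31 = 0 \<and> cinner a00 a31 \<noteq> 0 \<and> cinner a10 a21 \<noteq> 0"
  by (rule plane[OF b00p(6)]) (simp_all add: O)
lemma W3: "cinner a10 a21 = 0 \<Longrightarrow> pe a00 a21 \<and> pe a10 a31 \<and> cinner a00 a31 = 0 \<and> cinner a10 a31 \<noteq> 0 \<and> cinner a00 a21 \<noteq> 0"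
  by (rule plane[OF b00p(7)]) (simp_all add: O)
lemma W'1: "cinner a00 a31 = 0 \<Longrightarrow> pe a10 a31 \<and> pe a00 a21 \<and> cinner a10 a21 = 0 \<and> cinner a00 a21 \<noteq> 0 \<and> cinner a10 a31 \<noteq> 0"
  by (rule plane[OF b00p(6)]) (simp_all add: O)
lemma W'3: "cinner a10 a31 = 0 \<Longrightarrow> pe a00 a31 \<and> pe a10 a21 \<and> cinner a00 a21 = 0 \<and> cinner a10 a21 \<noteq> 0 \<and> cinner a00 a31 \<noteq> 0"
  by (rule plane[OF b00p(7)]) (simp_all add: O)

lemma npe_e:
  "cinner a00 u = 0 \<Longrightarrow> cinner a00 v \<noteq> 0 \<Longrightarrow> pe u v = False"
  "cinner a01 u = 0 \<Longrightarrow> cinner a01 v \<noteq> 0 \<Longrightarrow> pe u v = False"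
  "cinner a10 u = 0 \<Longrightarrow> cinner a10 v \<noteq> 0 \<Longrightarrow> pe u v = False"
  "cinner a11 u = 0 \<Longrightarrow> cinner a11 v \<noteq> 0 \<Longrightarrow> pe u v = False"
  "cinner a00 u \<noteq> 0 \<Longrightarrow> cinner a00 v = 0 \<Longrightarrow> pe u v = False"
  "cinner a01 u \<noteq> 0 \<Longrightarrow> cinner a01 v = 0 \<Longrightarrow> pe u v = False"
  "cinner a10 u \<noteq> 0 \<Longrightarrow> cinner a10 v = 0 \<Longrightarrow> pe u v = False"
  "cinner a11 u \<noteq> 0 \<Longrightarrow> cinner a11 v = 0 \<Longrightarrow> pe u v = False"
  using npe_coord npe_coord2 by blast+

end


context grid begin

abbreviation "G \<equiv> gset a00 a01 a02 a03 a10 a11 a12 a13 a20 a21 a22 a23 a30 a31 a32 a33"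

lemma caseA:
  assumes g: "cinner a10 a02 \<noteq> 0" "cinner a11 a02 \<noteq> 0" "cinner a00 a12 \<noteq> 0" "cinner a01 a12 \<noteq> 0"
    "cinner a01 a20 \<noteq> 0" "cinner a11 a20 \<noteq> 0" "cinner a00 a21 \<noteq> 0" "cinner a10 a21 \<noteq> 0"
  shows "card (cls ` G) = 16"
proof -
  have p: "cinner a10 a03 \<noteq> 0" "cinner a11 a03 \<noteq> 0" "cinner a00 a13 \<noteq> 0" "cinner a01 a13 \<noteq> 0"
    "cinner a01 a30 \<noteq> 0" "cinner a11 a30 \<noteq> 0" "cinner a00 a31 \<noteq> 0" "cinner a10 a31 \<noteq> 0"
    using g X'3 X'4 Y'1 Y'2 Z'2 Z'4 W'1 W'3 by blast+
  have f1: "cinner a00 a22 \<noteq> 0 \<and> cinner a01 a22 \<noteq> 0 \<and> cinner a10 a22 \<noteq> 0 \<and> cinner a11 a22 \<noteq> 0"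
    by (rule chain[OF feq12[of a02 a22] feq34[of a12 a22] feq13[of a20 a22] feq24[of a21 a22] nz[of a22]])
      (simp_all add: O g p)
  have f2: "cinner a00 a23 \<noteq> 0 \<and> cinner a01 a23 \<noteq> 0 \<and> cinner a10 a23 \<noteq> 0 \<and> cinner a11 a23 \<noteq> 0"
    by (rule chain[OF feq12[of a03 a23] feq34[of a13 a23] feq13[of a20 a23] feq24[of a21 a23] nz[of a23]])
      (simp_all add: O g p)
  have f3: "cinner a00 a32 \<noteq> 0 \<and> cinner a01 a32 \<noteq> 0 \<and> cinner a10 a32 \<noteq> 0 \<and> cinner a11 a32 \<noteq> 0"
    by (rule chain[OF feq12[of a02 a32] feq34[of a12 a32] feq13[of a30 a32] feq24[of a31 a32] nz[of a32]])
      (simp_all add: O g p)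
  have f4: "cinner a00 a33 \<noteq> 0 \<and> cinner a01 a33 \<noteq> 0 \<and> cinner a10 a33 \<noteq> 0 \<and> cinner a11 a33 \<noteq> 0"
    by (rule chain[OF feq12[of a03 a33] feq34[of a13 a33] feq13[of a30 a33] feq24[of a31 a33] nz[of a33]])
      (simp_all add: O g p)
  have "card (cls ` G) = length [a00, a01, a02, a03, a10, a11, a12, a13, a20, a21, a22, a23, a30, a31, a32, a33]"
    apply (rule card_R)
      apply (simp add: gset_def)
     apply (simp add: gset_def pe_refl)
    apply (simp add: cls_eq npe npe_e O g p f1 f2 f3 f4)
    done
  then show ?thesis by simp
qed

end


context grid begin

lemma cyc1: "(cinner a00 a12 = 0 \<or> cinner a01 a20 = 0 \<or> cinner a11 a02 = 0 \<or> cinner a10 a21 = 0) =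
   (cinner a01 a12 = 0 \<or> cinner a11 a20 = 0 \<or> cinner a10 a02 = 0 \<or> cinner a00 a21 = 0)"
proof -
  have "(cnj (cinner a00 a12) * cnj (cinner a01 a20) * cnj (cinner a11 a02) * cnj (cinner a10 a21) = 0) =
        (cnj (cinner a01 a12) * cnj (cinner a11 a20) * cnj (cinner a10 a02) * cnj (cinner a00 a21) = 0)"
    by (rule cycz[OF feq12[of a02 a22] feq34[of a12 a22] feq13[of a20 a22] feq24[of a21 a22] nz[of a22]])
      (simp_all add: O)
  then show ?thesis by simp
qed

lemma cyc3: "(cinner a00 a12 = 0 \<or> cinner a01 a30 = 0 \<or> cinner a11 a02 = 0 \<or> cinner a10 a31 = 0) =
   (cinner a01 a12 = 0 \<or> cinner a11 a30 = 0 \<or> cinner a10 a02 = 0 \<or> cinner a00 a31 = 0)"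
proof -
  have "(cnj (cinner a00 a12) * cnj (cinner a01 a30) * cnj (cinner a11 a02) * cnj (cinner a10 a31) = 0) =
        (cnj (cinner a01 a12) * cnj (cinner a11 a30) * cnj (cinner a10 a02) * cnj (cinner a00 a31) = 0)"
    by (rule cycz[OF feq12[of a02 a32] feq34[of a12 a32] feq13[of a30 a32] feq24[of a31 a32] nz[of a32]])
      (simp_all add: O)
  then show ?thesis by simp
qed

lemma caseB_sub:
  assumes gz: "cinner a01 a20 \<noteq> 0" "cinner a11 a20 \<noteq> 0" "cinner a00 a21 \<noteq> 0" "cinner a10 a21 \<noteq> 0"
    and xp: "pe a10 a02" "pe a11 a03" "pe a00 a12" "pe a01 a13"
  shows "card (cls ` G) = 8"
proof -
  have p: "cinner a01 a30 \<noteq> 0" "cinner a11 a30 \<noteq> 0" "cinner a00 a31 \<noteq> 0" "cinner a10 a31 \<noteq> 0"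
    using gz Z'2 Z'4 W'1 W'3 by blast+
  have f1: "pe a30 a22"
    by (rule L3[OF c0]) (simp_all add: O pe_tr_r[OF xp(3)] pe_tr_r[OF xp(1)])
  have f2: "pe a31 a23"
    by (rule L3[OF c1]) (simp_all add: O pe_tr_r[OF xp(4)] pe_tr_r[OF xp(2)])
  have f3: "pe a20 a32"
    by (rule L3[OF onb4_sw34[OF c0]]) (simp_all add: O pe_tr_r[OF xp(3)] pe_tr_r[OF xp(1)])
  have f4: "pe a21 a33"
    by (rule L3[OF onb4_sw34[OF c1]]) (simp_all add: O pe_tr_r[OF xp(4)] pe_tr_r[OF xp(2)])
  have "card (cls ` G) = length [a00, a01, a10, a11, a20, a21, a30, a31]"
    apply (rule card_R)
      apply (simp add: gset_def)
     apply (simp add: gset_def pe_refl xp f1 f2 f3 f4)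
    apply (simp add: cls_eq npe npe_e O gz p)
    done
  then show ?thesis by simp
qed

lemma caseB_sub':
  assumes gz: "cinner a01 a20 \<noteq> 0" "cinner a11 a20 \<noteq> 0" "cinner a00 a21 \<noteq> 0" "cinner a10 a21 \<noteq> 0"
    and xp: "pe a11 a02" "pe a10 a03" "pe a01 a12" "pe a00 a13"
  shows "card (cls ` G) = 8"
proof -
  have p: "cinner a01 a30 \<noteq> 0" "cinner a11 a30 \<noteq> 0" "cinner a00 a31 \<noteq> 0" "cinner a10 a31 \<noteq> 0"
    using gz Z'2 Z'4 W'1 W'3 by blast+
  have f1: "pe a31 a22"
    by (rule L3[OF c1]) (simp_all add: O pe_tr_r[OF xp(3)] pe_tr_r[OF xp(1)])
  have f2: "pe a30 a23"
    by (rule L3[OF c0]) (simp_all add: O pe_tr_r[OF xp(4)] pe_tr_r[OF xp(2)])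
  have f3: "pe a21 a32"
    by (rule L3[OF onb4_sw34[OF c1]]) (simp_all add: O pe_tr_r[OF xp(3)] pe_tr_r[OF xp(1)])
  have f4: "pe a20 a33"
    by (rule L3[OF onb4_sw34[OF c0]]) (simp_all add: O pe_tr_r[OF xp(4)] pe_tr_r[OF xp(2)])
  have "card (cls ` G) = length [a00, a01, a10, a11, a20, a21, a30, a31]"
    apply (rule card_R)
      apply (simp add: gset_def)
     apply (simp add: gset_def pe_refl xp f1 f2 f3 f4)
    apply (simp add: cls_eq npe npe_e O gz p)
    done
  then show ?thesis by simp
qed

lemma caseB:
  assumes gz: "cinner a01 a20 \<noteq> 0" "cinner a11 a20 \<noteq> 0" "cinner a00 a21 \<noteq> 0" "cinner a10 a21 \<noteq> 0"
    and ax: "cinner a10 a02 = 0 \<or> cinner a11 a02 = 0" and ay: "cinner a00 a12 = 0 \<or> cinner a01 a12 = 0"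
  shows "card (cls ` G) = 8"
proof -
  have c: "(cinner a00 a12 = 0 \<or> cinner a11 a02 = 0) = (cinner a01 a12 = 0 \<or> cinner a10 a02 = 0)"
    using cyc1 gz by simp
  show ?thesis
  proof (cases "cinner a10 a02 = 0")
    case True
    then have "cinner a11 a02 \<noteq> 0" using X3 by blast
    then have "cinner a00 a12 = 0" using c True by blast
    then show ?thesis using caseB_sub'[OF gz] X3[OF True] Y1 by blast
  next
    case False
    then have "cinner a11 a02 = 0" using ax by blast
    then have "cinner a01 a12 = 0" using c False Y1 by blast
    then show ?thesis using caseB_sub[OF gz] X4 \<open>cinner a11 a02 = 0\<close> Y2 by blast
  qed
qed

end


context grid begin

lemma tX3: "cinner a10 a02 = 0 \<Longrightarrow> cinner a11 a22 = 0 \<and> cinner a11 a32 = 0 \<and> cinner a10 a23 = 0 \<and> cinner a10 a33 = 0"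
  using X3 by (auto simp: O intro: pe_tr_r)
lemma tX4: "cinner a11 a02 = 0 \<Longrightarrow> cinner a10 a22 = 0 \<and> cinner a10 a32 = 0 \<and> cinner a11 a23 = 0 \<and> cinner a11 a33 = 0"
  using X4 by (auto simp: O intro: pe_tr_r)
lemma tY1: "cinner a00 a12 = 0 \<Longrightarrow> cinner a01 a22 = 0 \<and> cinner a01 a32 = 0 \<and> cinner a00 a23 = 0 \<and> cinner a00 a33 = 0"
  using Y1 by (auto simp: O intro: pe_tr_r)
lemma tY2: "cinner a01 a12 = 0 \<Longrightarrow> cinner a00 a22 = 0 \<and> cinner a00 a32 = 0 \<and> cinner a01 a23 = 0 \<and> cinner a01 a33 = 0"
  using Y2 by (auto simp: O intro: pe_tr_r)
lemma tZ2: "cinner a01 a20 = 0 \<Longrightarrow> cinner a11 a22 = 0 \<and> cinner a11 a23 = 0 \<and> cinner a01 a32 = 0 \<and> cinner a01 a33 = 0"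
  using Z2 by (auto simp: O intro: pe_tr_r)
lemma tZ4: "cinner a11 a20 = 0 \<Longrightarrow> cinner a01 a22 = 0 \<and> cinner a01 a23 = 0 \<and> cinner a11 a32 = 0 \<and> cinner a11 a33 = 0"
  using Z4 by (auto simp: O intro: pe_tr_r)
lemma tW1: "cinner a00 a21 = 0 \<Longrightarrow> cinner a10 a22 = 0 \<and> cinner a10 a23 = 0 \<and> cinner a00 a32 = 0 \<and> cinner a00 a33 = 0"
  using W1 by (auto simp: O intro: pe_tr_r)
lemma tW3: "cinner a10 a21 = 0 \<Longrightarrow> cinner a00 a22 = 0 \<and> cinner a00 a23 = 0 \<and> cinner a10 a32 = 0 \<and> cinner a10 a33 = 0"
  using W3 by (auto simp: O intro: pe_tr_r)

lemma caseC:
  assumes ax: "cinner a10 a02 = 0 \<or> cinner a11 a02 = 0" and ay: "cinner a00 a12 = 0 \<or> cinner a01 a12 = 0"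
   and az: "cinner a01 a20 = 0 \<or> cinner a11 a20 = 0" and aw: "cinner a00 a21 = 0 \<or> cinner a10 a21 = 0"
  shows "card (cls ` G) = 4"
proof -
  have u: "cinner a22 a22 = 1" "cinner a23 a23 = 1" "cinner a32 a32 = 1" "cinner a33 a33 = 1"
    by (simp_all add: O)
  note L = L3e[OF u(1)] L3e[OF u(2)] L3e[OF u(3)] L3e[OF u(4)]
  note N = nz[OF u(1)] nz[OF u(2)] nz[OF u(3)] nz[OF u(4)]
  have F: "(pe a00 a22 \<or> pe a01 a22 \<or> pe a10 a22 \<or> pe a11 a22) \<and>
    (pe a00 a23 \<or> pe a01 a23 \<or> pe a10 a23 \<or> pe a11 a23) \<and>
    (pe a00 a32 \<or> pe a01 a32 \<or> pe a10 a32 \<or> pe a11 a32) \<and>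
    (pe a00 a33 \<or> pe a01 a33 \<or> pe a10 a33 \<or> pe a11 a33)"
    apply (insert ax ay az aw)
    apply (elim disjE; drule tX3 tX4; drule tY1 tY2; drule tZ2 tZ4; drule tW1 tW3; elim conjE)
    apply (insert L N)
    apply simp_all
    done
  have Xf: "(pe a00 a02 \<or> pe a01 a02 \<or> pe a10 a02 \<or> pe a11 a02) \<and>
    (pe a00 a03 \<or> pe a01 a03 \<or> pe a10 a03 \<or> pe a11 a03) \<and>
    (pe a00 a12 \<or> pe a01 a12 \<or> pe a10 a12 \<or> pe a11 a12) \<and>
    (pe a00 a13 \<or> pe a01 a13 \<or> pe a10 a13 \<or> pe a11 a13) \<and>
    (pe a00 a20 \<or> pe a01 a20 \<or> pe a10 a20 \<or> pe a11 a20) \<and>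
    (pe a00 a30 \<or> pe a01 a30 \<or> pe a10 a30 \<or> pe a11 a30) \<and>
    (pe a00 a21 \<or> pe a01 a21 \<or> pe a10 a21 \<or> pe a11 a21) \<and>
    (pe a00 a31 \<or> pe a01 a31 \<or> pe a10 a31 \<or> pe a11 a31)"
    using ax ay az aw X3 X4 Y1 Y2 Z2 Z4 W1 W3 by blast
  have "card (cls ` G) = length [a00, a01, a10, a11]"
    apply (rule card_R)
      apply (simp add: gset_def)
    using F Xf apply (simp add: gset_def pe_refl)
    apply (simp add: cls_eq npe O)
    done
  then show ?thesis by simp
qed

lemma D0:
  assumes x3: "cinner a10 a02 = 0" and gy: "cinner a00 a12 \<noteq> 0" "cinner a01 a12 \<noteq> 0"
  shows "(cinner a01 a20 = 0 \<and> cinner a00 a21 = 0) \<or> (cinner a10 a21 = 0 \<and> cinner a11 a20 = 0)"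
proof -
  have x4: "cinner a11 a02 \<noteq> 0" using X3[OF x3] by blast
  have h1: "cinner a01 a20 = 0 \<or> cinner a10 a21 = 0" using cyc1 x3 x4 gy by blast
  have h3: "cinner a01 a30 = 0 \<or> cinner a10 a31 = 0" using cyc3 x3 x4 gy by blast
  have h3': "cinner a11 a20 = 0 \<or> cinner a00 a21 = 0" using h3 Z'2 W'3 by blast
  show ?thesis using h1 h3' Z2 W1 by blast
qed

lemma caseD:
  assumes x3: "cinner a10 a02 = 0" and gy: "cinner a00 a12 \<noteq> 0" "cinner a01 a12 \<noteq> 0"
  shows "card (cls ` G) = 6"
proof -
  have xp: "pe a11 a02" "pe a10 a03" using X3[OF x3] by auto
  have gy': "cinner a00 a13 \<noteq> 0" "cinner a01 a13 \<noteq> 0" using gy Y'1 Y'2 by blast+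
  have u: "cinner a22 a22 = 1" "cinner a23 a23 = 1" "cinner a32 a32 = 1" "cinner a33 a33 = 1"
    by (simp_all add: O)
  from D0[OF x3 gy] show ?thesis
  proof
    assume h: "cinner a01 a20 = 0 \<and> cinner a00 a21 = 0"
    have zp: "pe a11 a20" "pe a01 a30" "pe a10 a21" "pe a00 a31" using h Z2 W1 by auto
    have f1: "pe a13 a22"
      by (rule L3[OF b01]) (simp_all add: O pe_tr_l[OF xp(2)] pe_tr_r[OF zp(3)])
    have f2: "pe a12 a23"
      by (rule L3[OF onb4_sw34[OF b01]]) (simp_all add: O pe_tr_l[OF xp(1)] pe_tr_r[OF zp(1)])
    have f3: "pe a10 a32"
      using L3e[OF u(3)] by (simp add: O pe_tr_r[OF zp(4)] pe_tr_r[OF zp(2)] pe_tr_r[OF xp(1)])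
    have f4: "pe a11 a33"
      using L3e[OF u(4)] by (simp add: O pe_tr_r[OF zp(4)] pe_tr_r[OF zp(2)] pe_tr_r[OF xp(2)])
    have "card (cls ` G) = length [a00, a01, a10, a11, a12, a13]"
      apply (rule card_R)
        apply (simp add: gset_def)
       apply (simp add: gset_def pe_refl xp zp f1 f2 f3 f4)
      apply (simp add: cls_eq npe npe_e O gy gy')
      done
    then show ?thesis by simp
  next
    assume h: "cinner a10 a21 = 0 \<and> cinner a11 a20 = 0"
    have zp: "pe a01 a20" "pe a11 a30" "pe a00 a21" "pe a10 a31" using h Z4 W3 by auto
    have f1: "pe a10 a22"
      using L3e[OF u(1)] by (simp add: O pe_tr_r[OF zp(1)] pe_tr_r[OF zp(3)] pe_tr_r[OF xp(1)])
    have f2: "pe a11 a23"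
      using L3e[OF u(2)] by (simp add: O pe_tr_r[OF zp(1)] pe_tr_r[OF zp(3)] pe_tr_r[OF xp(2)])
    have f3: "pe a13 a32"
      by (rule L3[OF b01]) (simp_all add: O pe_tr_l[OF xp(2)] pe_tr_r[OF zp(4)])
    have f4: "pe a12 a33"
      by (rule L3[OF onb4_sw34[OF b01]]) (simp_all add: O pe_tr_l[OF xp(1)] pe_tr_r[OF zp(2)])
    have "card (cls ` G) = length [a00, a01, a10, a11, a12, a13]"
      apply (rule card_R)
        apply (simp add: gset_def)
       apply (simp add: gset_def pe_refl xp zp f1 f2 f3 f4)
      apply (simp add: cls_eq npe npe_e O gy gy')
      done
    then show ?thesis by simp
  qed
qed

end



lemma grid_T: assumes "grid a00 a01 a02 a03 a10 a11 a12 a13 a20 a21 a22 a23 a30 a31 a32 a33"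
  shows "grid a00 a10 a20 a30 a01 a11 a21 a31 a02 a12 a22 a32 a03 a13 a23 a33"
proof -
  interpret grid a00 a01 a02 a03 a10 a11 a12 a13 a20 a21 a22 a23 a30 a31 a32 a33 by fact
  show ?thesis unfolding grid_def using c0 c1 c2 c3 r0 r1 r2 r3 onb4_sw23[OF b00] onb4_sw23[OF b10]
    onb4_sw23[OF b01] onb4_sw23[OF b11] by simp
qed

lemma grid_R01: assumes "grid a00 a01 a02 a03 a10 a11 a12 a13 a20 a21 a22 a23 a30 a31 a32 a33"
  shows "grid a10 a11 a12 a13 a00 a01 a02 a03 a20 a21 a22 a23 a30 a31 a32 a33"
proof -
  interpret grid a00 a01 a02 a03 a10 a11 a12 a13 a20 a21 a22 a23 a30 a31 a32 a33 by fact
  show ?thesis unfolding grid_def using r0 r1 r2 r3 onb4_sw12[OF c0] onb4_sw12[OF c1] onb4_sw12[OF c2]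
    onb4_sw12[OF c3] onb4_swp[OF b00] onb4_swp[OF b01] b10 b11 by simp
qed

lemma grid_C01: assumes "grid a00 a01 a02 a03 a10 a11 a12 a13 a20 a21 a22 a23 a30 a31 a32 a33"
  shows "grid a01 a00 a02 a03 a11 a10 a12 a13 a21 a20 a22 a23 a31 a30 a32 a33"
proof -
  interpret grid a00 a01 a02 a03 a10 a11 a12 a13 a20 a21 a22 a23 a30 a31 a32 a33 by fact
  show ?thesis unfolding grid_def using c0 c1 c2 c3 onb4_sw12[OF r0] onb4_sw12[OF r1] onb4_sw12[OF r2]
    onb4_sw12[OF r3] onb4_sw12[OF onb4_sw34[OF b00]] b01 onb4_sw12[OF onb4_sw34[OF b10]] b11 by simp
qed

lemma gset_T: "gset a00 a10 a20 a30 a01 a11 a21 a31 a02 a12 a22 a32 a03 a13 a23 a33 =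
  gset a00 a01 a02 a03 a10 a11 a12 a13 a20 a21 a22 a23 a30 a31 a32 a33"
  unfolding gset_def by (simp add: insert_commute)
lemma gset_R01: "gset a10 a11 a12 a13 a00 a01 a02 a03 a20 a21 a22 a23 a30 a31 a32 a33 =
  gset a00 a01 a02 a03 a10 a11 a12 a13 a20 a21 a22 a23 a30 a31 a32 a33"
  unfolding gset_def by (simp add: insert_commute)
lemma gset_C01: "gset a01 a00 a02 a03 a11 a10 a12 a13 a21 a20 a22 a23 a31 a30 a32 a33 =
  gset a00 a01 a02 a03 a10 a11 a12 a13 a20 a21 a22 a23 a30 a31 a32 a33"
  unfolding gset_def by (simp add: insert_commute)

lemma Dx:
  assumes g: "grid a00 a01 a02 a03 a10 a11 a12 a13 a20 a21 a22 a23 a30 a31 a32 a33"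
    and ax: "cinner a10 a02 = 0 \<or> cinner a11 a02 = 0" and gy: "cinner a00 a12 \<noteq> 0" "cinner a01 a12 \<noteq> 0"
  shows "card (cls ` gset a00 a01 a02 a03 a10 a11 a12 a13 a20 a21 a22 a23 a30 a31 a32 a33) = 6"
  using ax
proof
  assume h: "cinner a10 a02 = 0"
  show ?thesis by (rule grid.caseD[OF g h gy])
next
  assume h: "cinner a11 a02 = 0"
  have "card (cls ` gset a01 a00 a02 a03 a11 a10 a12 a13 a21 a20 a22 a23 a31 a30 a32 a33) = 6"
    by (rule grid.caseD[OF grid_C01[OF g] h gy(2,1)])
  then show ?thesis by (simp only: gset_C01)
qed

lemma Dy:
  assumes g: "grid a00 a01 a02 a03 a10 a11 a12 a13 a20 a21 a22 a23 a30 a31 a32 a33"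
    and ay: "cinner a00 a12 = 0 \<or> cinner a01 a12 = 0" and gx: "cinner a10 a02 \<noteq> 0" "cinner a11 a02 \<noteq> 0"
  shows "card (cls ` gset a00 a01 a02 a03 a10 a11 a12 a13 a20 a21 a22 a23 a30 a31 a32 a33) = 6"
proof -
  have "card (cls ` gset a10 a11 a12 a13 a00 a01 a02 a03 a20 a21 a22 a23 a30 a31 a32 a33) = 6" by (rule Dx[OF grid_R01[OF g] ay gx])
  then show ?thesis by (simp only: gset_R01)
qed

lemma Dz:
  assumes g: "grid a00 a01 a02 a03 a10 a11 a12 a13 a20 a21 a22 a23 a30 a31 a32 a33"
    and az: "cinner a01 a20 = 0 \<or> cinner a11 a20 = 0" and gw: "cinner a00 a21 \<noteq> 0" "cinner a10 a21 \<noteq> 0"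
  shows "card (cls ` gset a00 a01 a02 a03 a10 a11 a12 a13 a20 a21 a22 a23 a30 a31 a32 a33) = 6"
proof -
  have "card (cls ` gset a00 a10 a20 a30 a01 a11 a21 a31 a02 a12 a22 a32 a03 a13 a23 a33) = 6" by (rule Dx[OF grid_T[OF g] az gw])
  then show ?thesis by (simp only: gset_T)
qed

lemma Dw:
  assumes g: "grid a00 a01 a02 a03 a10 a11 a12 a13 a20 a21 a22 a23 a30 a31 a32 a33"
    and aw: "cinner a00 a21 = 0 \<or> cinner a10 a21 = 0" and gz: "cinner a01 a20 \<noteq> 0" "cinner a11 a20 \<noteq> 0"
  shows "card (cls ` gset a00 a01 a02 a03 a10 a11 a12 a13 a20 a21 a22 a23 a30 a31 a32 a33) = 6"
proof -
  have "card (cls ` gset a00 a10 a20 a30 a01 a11 a21 a31 a02 a12 a22 a32 a03 a13 a23 a33) = 6" by (rule Dy[OF grid_T[OF g] aw gz])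
  then show ?thesis by (simp only: gset_T)
qed

lemma main_grid:
  assumes g: "grid a00 a01 a02 a03 a10 a11 a12 a13 a20 a21 a22 a23 a30 a31 a32 a33"
  shows "card (cls ` gset a00 a01 a02 a03 a10 a11 a12 a13 a20 a21 a22 a23 a30 a31 a32 a33) \<in> {4, 6, 8, 16}"
proof (cases "cinner a10 a02 = 0 \<or> cinner a11 a02 = 0")
  case ax: True
  show ?thesis
  proof (cases "cinner a00 a12 = 0 \<or> cinner a01 a12 = 0")
    case ay: True
    show ?thesis
    proof (cases "cinner a01 a20 = 0 \<or> cinner a11 a20 = 0")
      case az: True
      show ?thesis
      proof (cases "cinner a00 a21 = 0 \<or> cinner a10 a21 = 0")
        case True
        then show ?thesis using grid.caseC[OF g ax ay az] by simp
      next
        case False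
        then show ?thesis using Dz[OF g az] by simp
      qed
    next
      case az: False
      show ?thesis
      proof (cases "cinner a00 a21 = 0 \<or> cinner a10 a21 = 0")
        case True
        then show ?thesis using Dw[OF g True] az by simp
      next
        case False
        then show ?thesis using grid.caseB[OF g _ _ _ _ ax ay] az by simp
      qed
    qed
  next
    case False
    then show ?thesis using Dx[OF g ax] by simp
  qed
next
  case ax: False
  show ?thesis
  proof (cases "cinner a00 a12 = 0 \<or> cinner a01 a12 = 0")
    case ay: True
    then show ?thesis using Dy[OF g ay] ax by simp
  next
    case ay: False
    show ?thesis
    proof (cases "cinner a01 a20 = 0 \<or> cinner a11 a20 = 0")
      case az: True
      show ?thesis
      proof (cases "cinner a00 a21 = 0 \<or> cinner a10 a21 = 0")
        case True
        have "card (cls ` gset a00 a10 a20 a30 a01 a11 a21 a31 a02 a12 a22 a32 a03 a13 a23 a33) = 8"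
          by (rule grid.caseB[OF grid_T[OF g] _ _ _ _ az True]) (use ax ay in auto)
        then show ?thesis by (simp only: gset_T) simp
      next
        case False
        then show ?thesis using Dz[OF g az] by simp
      qed
    next
      case az: False
      show ?thesis
      proof (cases "cinner a00 a21 = 0 \<or> cinner a10 a21 = 0")
        case True
        then show ?thesis using Dw[OF g True] az by simp
      next
        case False
        then show ?thesis using grid.caseA[OF g] ax ay az by simp
      qed
    qed
  qed
qed

theorem mainTheorem17:
  fixes S :: "nat \<Rightarrow> nat \<Rightarrow> complex ^ 4"
  assumes "sudoq4 S"
  shows "sudoq_card S \<in> {4, 6, 8, 16}"
proof -
  have u: "\<forall>i<4. is_onb (\<lambda>j. S i j)" "\<forall>j<4. is_onb (\<lambda>i. S i j)"
    "\<forall>a<2. \<forall>b<2. is_onb (\<lambda>k. S (2 * a + k div 2) (2 * b + k mod 2))"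
    using assms unfolding sudoq4_def by auto
  have g: "grid (S 0 0) (S 0 1) (S 0 2) (S 0 3) (S 1 0) (S 1 1) (S 1 2) (S 1 3)
     (S 2 0) (S 2 1) (S 2 2) (S 2 3) (S 3 0) (S 3 1) (S 3 2) (S 3 3)"
    unfolding grid_def
    using is_onb_onb4[OF u(1)[rule_format, of 0]] is_onb_onb4[OF u(1)[rule_format, of 1]]
      is_onb_onb4[OF u(1)[rule_format, of 2]] is_onb_onb4[OF u(1)[rule_format, of 3]]
      is_onb_onb4[OF u(2)[rule_format, of 0]] is_onb_onb4[OF u(2)[rule_format, of 1]]
      is_onb_onb4[OF u(2)[rule_format, of 2]] is_onb_onb4[OF u(2)[rule_format, of 3]]
      is_onb_onb4[OF u(3)[rule_format, of 0 0]] is_onb_onb4[OF u(3)[rule_format, of 0 1]]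
      is_onb_onb4[OF u(3)[rule_format, of 1 0]] is_onb_onb4[OF u(3)[rule_format, of 1 1]]
    by simp
  have l4: "{..<4::nat} = {0,1,2,3}" by auto
  have "(\<lambda>(i, j). {w. phase_eq (S i j) w}) ` ({..<4} \<times> {..<4}) =
     cls ` gset (S 0 0) (S 0 1) (S 0 2) (S 0 3) (S 1 0) (S 1 1) (S 1 2) (S 1 3)
     (S 2 0) (S 2 1) (S 2 2) (S 2 3) (S 3 0) (S 3 1) (S 3 2) (S 3 3)"
  proof -
    have "(\<lambda>(i, j). {w. phase_eq (S i j) w}) ` ({..<4} \<times> {..<4}) = cls ` ((\<lambda>(i, j). S i j) ` ({..<4} \<times> {..<4}))"
      by (simp add: image_image case_prod_beta cls_def)
    also have "(\<lambda>(i, j). S i j) ` ({..<4} \<times> {..<4}) = gset (S 0 0) (S 0 1) (S 0 2) (S 0 3) (S 1 0) (S 1 1) (S 1 2) (S 1 3)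
     (S 2 0) (S 2 1) (S 2 2) (S 2 3) (S 3 0) (S 3 1) (S 3 2) (S 3 3)"
      unfolding l4 gset_def by (simp add: insert_commute)
    finally show ?thesis .
  qed
  then show ?thesis using main_grid[OF g] unfolding sudoq_card_def by simp
qed


end
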